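(* (a) Let $T$ be a numerical semigroup with $\alpha$-rectangular Apéry set, and let $d_1,d_2$ be coprime positive integers with $d_1\in T$ not a minimal generator of $T$, $d_2\ge 2$, $d_1\notin\mathrm{Ap}(T)$ and $d_1>d_2\,m(T)$. Then the numerical semigroup $S=d_2T+d_1\mathbb N=\{d_2t+d_1k: t\in T,k\in\mathbb N\}$ has $\alpha$-rectangular Apéry set. (b) Conversely, every numerical semigroup $S\neq\mathbb N$ with $\alpha$-rectangular Apéry set is of the form $S=d_2T+d_1\mathbb N$ for some numerical semigroup $T$ with $\alpha$-rectangular Apéry set and integers $d_1,d_2$ satisfying all the hypotheses in (a).
   Context: A numerical semigroup is a submonoid $S$ of $(\mathbb N,+)$ with finite complement in $\mathbb N$; $g_1<\dots<g_\nu$ is its minimal system of generators, $m(S)=g_1$ its multiplicity, and $\mathrm{Ap}(S)=\{s\in S: s-m(S)\notin S\}$. For $i=2,\dots,\nu$, $\alpha_i=\max\{h\in\mathbb N: hg_i\in\mathrm{Ap}(S)\}$, and $\mathrm{Ap}(S)$ is $\alpha$-rectangular if $\mathrm{Ap}(S)=\{\sum_{i=2}^\nu\lambda_ig_i: 0\le\lambda_i\le\alpha_i\}$. (Under the hypotheses of (a), $S=d_2T+d_1\mathbb N$ is the gluing of $T$ and $\mathbb N$, minimally generated by $d_2$ times the minimal generators of $T$ together with $d_1$.) *)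

theory Defs
  imports Main
begin

definition numerical_semigroup :: "nat set \<Rightarrow> bool" where
  "numerical_semigroup S \<longleftrightarrow> 0 \<in> S \<and> (\<forall>a\<in>S. \<forall>b\<in>S. a + b \<in> S) \<and> finite (UNIV - S)"

definition min_gens :: "nat set \<Rightarrow> nat set" where
  "min_gens S = {s \<in> S. s \<noteq> 0 \<and> \<not> (\<exists>a\<in>S. \<exists>b\<in>S. a \<noteq> 0 \<and> b \<noteq> 0 \<and> s = a + b)}"

definition multiplicity_ns :: "nat set \<Rightarrow> nat" where
  "multiplicity_ns S = (LEAST x. x \<in> S \<and> x \<noteq> 0)"

text \<open>Apery set with respect to the multiplicity: s in S with s - m(S) not in S
  (as an integer, i.e. either s < m(S) or s - m(S) is not in S).\<close>
definition apery :: "nat set \<Rightarrow> nat set" where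
  "apery S = {s \<in> S. \<not> (multiplicity_ns S \<le> s \<and> s - multiplicity_ns S \<in> S)}"

definition alpha_ns :: "nat set \<Rightarrow> nat \<Rightarrow> nat" where
  "alpha_ns S g = (GREATEST h. h * g \<in> apery S)"

definition other_gens :: "nat set \<Rightarrow> nat set" where
  "other_gens S = min_gens S - {multiplicity_ns S}"

definition alpha_rectangular :: "nat set \<Rightarrow> bool" where
  "alpha_rectangular S \<longleftrightarrow>
     apery S = {(\<Sum>g\<in>other_gens S. lam g * g) | lam. \<forall>g\<in>other_gens S. lam g \<le> alpha_ns S g}"

definition gluing_N :: "nat \<Rightarrow> nat set \<Rightarrow> nat \<Rightarrow> nat set" where
  "gluing_N d2 T d1 = {d2 * t + d1 * k | t k. t \<in> T}"

end

theory Submission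
  imports Defs "HOL-Number_Theory.Cong"
begin

locale ns =
  fixes S :: "nat set"
  assumes nsg: "numerical_semigroup S"
begin

abbreviation "m \<equiv> multiplicity_ns S"

lemma zero_in: "0 \<in> S" using nsg by (simp add: numerical_semigroup_def)
lemma add_in: "a \<in> S \<Longrightarrow> b \<in> S \<Longrightarrow> a + b \<in> S" using nsg by (simp add: numerical_semigroup_def)
lemma mult_in: "a \<in> S \<Longrightarrow> k * a \<in> S"
  by (induction k) (auto simp: zero_in add_in)
lemma sum_in: "(\<And>x. x \<in> A \<Longrightarrow> f x \<in> S) \<Longrightarrow> sum f A \<in> S"
proof (induction A rule: infinite_finite_induct)
  case (infinite A) then show ?case by (simp add: zero_in)
next
  case empty then show ?case by (simp add: zero_in)
next
  case (insert x F) then show ?case by (simp add: add_in)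
qed

lemma large: "\<exists>N. \<forall>n\<ge>N. n \<in> S"
proof -
  have "finite (UNIV - S)" using nsg by (simp add: numerical_semigroup_def)
  then obtain k where "\<forall>n\<in>UNIV - S. n < k" using finite_nat_set_iff_bounded by blast
  then show ?thesis by (intro exI[of _ k]) (use leD in blast)
qed

lemma m_ex: "\<exists>x. x \<in> S \<and> x \<noteq> 0"
proof -
  obtain N where "\<forall>n\<ge>N. n \<in> S" using large by blast
  then show ?thesis by (intro exI[of _ "Suc N"]) auto
qed

lemma m_in: "m \<in> S" and m_pos: "m > 0"
  using LeastI_ex[OF m_ex] unfolding multiplicity_ns_def by auto

lemma m_le: "x \<in> S \<Longrightarrow> x \<noteq> 0 \<Longrightarrow> m \<le> x"
  unfolding multiplicity_ns_def by (rule Least_le) simp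

lemma ap_iff: "x \<in> apery S \<longleftrightarrow> x \<in> S \<and> \<not> (m \<le> x \<and> x - m \<in> S)"
  by (simp add: apery_def)

lemma ap_bounded: "\<exists>K. apery S \<subseteq> {..<K}"
proof -
  obtain N where N: "\<forall>n\<ge>N. n \<in> S" using large by blast
  have "apery S \<subseteq> {..<m+N}"
  proof
    fix x assume "x \<in> apery S"
    then have "x \<in> S" "\<not> (m \<le> x \<and> x - m \<in> S)" by (auto simp: ap_iff)
    then show "x \<in> {..<m+N}" using N by (cases "x < m + N") auto
  qed
  then show ?thesis by blast
qed

lemma ap_finite: "finite (apery S)"
  using ap_bounded finite_subset by blast

lemma zero_ap: "0 \<in> apery S" using zero_in m_pos by (simp add: ap_iff)

lemma ap_decomp: "s \<in> S \<Longrightarrow> \<exists>a k. a \<in> apery S \<and> s = a + k * m"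
proof (induction s rule: less_induct)
  case (less s)
  show ?case
  proof (cases "s \<in> apery S")
    case True then show ?thesis by (intro exI[of _ s] exI[of _ 0]) simp
  next
    case False
    then have "m \<le> s" "s - m \<in> S" using less.prems by (auto simp: ap_iff)
    moreover have "s - m < s" using m_pos \<open>m \<le> s\<close> m_le less.prems
      by (metis diff_less gr0I le_0_eq)
    ultimately obtain a k where "a \<in> apery S" "s - m = a + k * m" using less.IH by blast
    then show ?thesis using \<open>m \<le> s\<close> by (intro exI[of _ a] exI[of _ "Suc k"]) auto
  qed
qed

lemma ap_unique: "a \<in> apery S \<Longrightarrow> b \<in> apery S \<Longrightarrow> a mod m = b mod m \<Longrightarrow> a = b"
proof -
  have *: "a = b" if "a \<in> apery S" "b \<in> apery S" "a mod m = b mod m" "a \<le> b" for a b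
  proof (rule ccontr)
    assume "a \<noteq> b"
    then have "a < b" using that by simp
    have "m dvd b - a" using that(3,4) mod_eq_dvd_iff_nat[of a b m] by simp
    then obtain q where q0: "b - a = m * q" by (auto simp: dvd_def)
    with \<open>a < b\<close> obtain q' where q': "q = Suc q'" by (cases q) auto
    have "b = a + m + q' * m" using q0 q' \<open>a < b\<close> by (simp add: algebra_simps)
    then have "b - m = a + q' * m" "m \<le> b" by auto
    then show False using that(1,2) mult_in[OF m_in] add_in by (auto simp: ap_iff)
  qed
  assume "a \<in> apery S" "b \<in> apery S" "a mod m = b mod m"
  then show "a = b" using *[of a b] *[of b a] by (cases "a \<le> b") auto
qed

lemma ap_down: "x + y \<in> apery S \<Longrightarrow> x \<in> S \<Longrightarrow> y \<in> S \<Longrightarrow> x \<in> apery S"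
proof -
  assume a: "x + y \<in> apery S" "x \<in> S" "y \<in> S"
  show "x \<in> apery S"
  proof (rule ccontr)
    assume "x \<notin> apery S"
    then have "m \<le> x" "x - m \<in> S" using a by (auto simp: ap_iff)
    then have "x + y - m \<in> S" "m \<le> x + y" using add_in[OF \<open>x - m \<in> S\<close> a(3)] by auto
    then show False using a(1) by (auto simp: ap_iff)
  qed
qed

lemma alpha_props:
  assumes "g > 0"
  shows "alpha_ns S g * g \<in> apery S" "j * g \<in> apery S \<Longrightarrow> j \<le> alpha_ns S g"
    "(alpha_ns S g + 1) * g \<notin> apery S"
proof -
  obtain K where K: "apery S \<subseteq> {..<K}" using ap_bounded by blast
  have bnd: "\<forall>y. y * g \<in> apery S \<longrightarrow> y \<le> K"
  proof (intro allI impI)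
    fix y assume "y * g \<in> apery S"
    then have "y * g < K" using K by auto
    moreover have "y \<le> y * g" using assms by simp
    ultimately show "y \<le> K" by linarith
  qed
  have p0: "0 * g \<in> apery S" using zero_ap by simp
  show "alpha_ns S g * g \<in> apery S" unfolding alpha_ns_def
    by (rule GreatestI_nat[where P="\<lambda>j. j * g \<in> apery S" and k=0 and b=K]) (use bnd p0 in auto)
  have le: "j * g \<in> apery S \<Longrightarrow> j \<le> alpha_ns S g" for j unfolding alpha_ns_def
    by (rule Greatest_le_nat[where b=K]) (use bnd in auto)
  then show "j * g \<in> apery S \<Longrightarrow> j \<le> alpha_ns S g" .
  show "(alpha_ns S g + 1) * g \<notin> apery S" using le[of "alpha_ns S g + 1"] by linarith
qed

lemma alpha_below: "g \<in> S \<Longrightarrow> g > 0 \<Longrightarrow> j \<le> alpha_ns S g \<Longrightarrow> j * g \<in> apery S"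
proof -
  assume a: "g \<in> S" "g > 0" "j \<le> alpha_ns S g"
  have "j * g + (alpha_ns S g - j) * g = alpha_ns S g * g" using a(3)
    by (simp add: add_mult_distrib[symmetric])
  then show ?thesis using ap_down alpha_props(1)[OF a(2)] mult_in[OF a(1)] by metis
qed


lemma mg_iff: "x \<in> min_gens S \<longleftrightarrow> x \<in> S \<and> x \<noteq> 0 \<and> \<not> (\<exists>a\<in>S. \<exists>b\<in>S. a \<noteq> 0 \<and> b \<noteq> 0 \<and> x = a + b)"
  by (simp add: min_gens_def)

lemma og_props:
  assumes "h \<in> other_gens S"
  shows "h \<in> S" "h > m" "h \<in> apery S" "h > 0" "alpha_ns S h \<ge> 1"
proof -
  have h: "h \<in> min_gens S" "h \<noteq> m" using assms by (auto simp: other_gens_def)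
  then show hS: "h \<in> S" and h0: "h > 0" by (auto simp: mg_iff)
  then have "m \<le> h" using m_le by auto
  then show hm: "h > m" using h by auto
  show hA: "h \<in> apery S"
  proof (rule ccontr)
    assume "h \<notin> apery S"
    then have "h - m \<in> S" using hS \<open>m \<le> h\<close> by (auto simp: ap_iff)
    moreover have "h = m + (h - m)" "h - m \<noteq> 0" using hm by auto
    ultimately show False using h(1) m_in m_pos unfolding mg_iff by (metis less_numeral_extra(3))
  qed
  show "alpha_ns S h \<ge> 1" using alpha_props(2)[OF h0, of 1] hA by simp
qed

lemma og_finite: "finite (other_gens S)"
  using og_props(3) ap_finite by (meson finite_subset subsetI)

end


lemma key_eq:
  fixes d1 d2 a b k k' :: nat
  assumes cop: "coprime d1 d2" and eq: "d2*a + d1*k = d2*b + d1*k'" and k: "k < d2"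
  shows "\<exists>j. k' = k + d2*j \<and> a = b + d1*j"
proof (cases "k \<le> k'")
  case True
  then obtain r where r: "k' = k + r" using nat_le_iff_add by blast
  then have e: "d2*a = d2*b + d1*r" using eq by (simp add: algebra_simps)
  have "d2 dvd d2*b + d1*r" unfolding e[symmetric] by simp
  then have "d2 dvd d1*r" by (simp add: dvd_add_right_iff)
  then have "d2 dvd r" using cop coprime_dvd_mult_right_iff coprime_commute by blast
  then obtain j where j: "r = d2*j" by (auto simp: dvd_def)
  have "d2*a = d2*(b + d1*j)" using e j by (simp add: algebra_simps)
  then have "a = b + d1*j" using k by simp
  then show ?thesis using r j by blast
next
  case False
  then obtain r where r: "k = k' + r" "r > 0" by (metis less_imp_add_positive not_le)
  then have e: "d2*b = d2*a + d1*r" using eq by (simp add: algebra_simps)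
  have "d2 dvd d2*a + d1*r" unfolding e[symmetric] by simp
  then have "d2 dvd d1*r" by (simp add: dvd_add_right_iff)
  then have "d2 dvd r" using cop coprime_dvd_mult_right_iff coprime_commute by blast
  moreover have "r < d2" using r k by simp
  ultimately show ?thesis using r(2) by (simp add: nat_dvd_not_less)
qed

lemma not_mg_intro: "a \<in> X \<Longrightarrow> b \<in> X \<Longrightarrow> a \<noteq> 0 \<Longrightarrow> b \<noteq> 0 \<Longrightarrow> a + b \<notin> min_gens X"
  by (auto simp: min_gens_def)

locale glue = T: ns T for T +
  fixes d1 d2 :: nat
  assumes rectT: "alpha_rectangular T" and d1pos: "0 < d1" and cop: "coprime d1 d2"
    and d1T: "d1 \<in> T" and d1ng: "d1 \<notin> min_gens T" and d2ge: "2 \<le> d2"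
    and d1nap: "d1 \<notin> apery T" and d1big: "d1 > d2 * multiplicity_ns T"
begin

abbreviation "Sg \<equiv> gluing_N d2 T d1"
abbreviation "mT \<equiv> multiplicity_ns T"

lemma d2pos: "d2 > 0" using d2ge by simp

lemma gl_iff: "x \<in> Sg \<longleftrightarrow> (\<exists>t k. t \<in> T \<and> x = d2*t + d1*k)"
  unfolding gluing_N_def by blast

lemma gl_mk: "t \<in> T \<Longrightarrow> d2*t + d1*k \<in> Sg"
  unfolding gl_iff by (rule exI[of _ t], rule exI[of _ k]) simp

lemma gl_d2: "t \<in> T \<Longrightarrow> d2*t \<in> Sg"
  using gl_mk[of t 0] by simp

lemma gl_red:
  assumes "x \<in> Sg" shows "\<exists>t k. t \<in> T \<and> k < d2 \<and> x = d2*t + d1*k"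
proof -
  obtain t k where tk: "t \<in> T" "x = d2*t + d1*k" using assms by (auto simp: gl_iff)
  define q r where "q = k div d2" and "r = k mod d2"
  have k: "k = q*d2 + r" "r < d2" using d2pos by (auto simp: q_def r_def)
  have "x = d2*(t + d1*q) + d1*r" using tk(2) k(1) by (simp add: algebra_simps)
  moreover have "t + d1*q \<in> T" using T.add_in[OF tk(1) T.mult_in[OF d1T, of q]] by (simp add: mult.commute)
  ultimately show ?thesis using k(2) by blast
qed

lemma d2_ndvd_d1: "\<not> d2 dvd d1"
proof
  assume a: "d2 dvd d1"
  have "d2 = 1" using coprime_common_divisor_nat[OF cop a dvd_refl] .
  then show False using d2ge by simp
qed

lemma gl_ns: "numerical_semigroup Sg"
proof -
  have z: "0 \<in> Sg" using T.zero_in by (auto simp: gl_iff)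
  have c: "\<forall>a\<in>Sg. \<forall>b\<in>Sg. a + b \<in> Sg"
  proof (intro ballI)
    fix a b assume "a \<in> Sg" "b \<in> Sg"
    then obtain ta ka tb kb where "ta \<in> T" "tb \<in> T" "a = d2*ta + d1*ka" "b = d2*tb + d1*kb"
      by (auto simp: gl_iff)
    then show "a + b \<in> Sg" unfolding gl_iff
      by (intro exI[of _ "ta+tb"] exI[of _ "ka+kb"]) (auto simp: T.add_in algebra_simps)
  qed
  obtain NT where NT: "\<forall>n\<ge>NT. n \<in> T" using T.large by blast
  obtain x where x: "[d1 * x = Suc 0] (mod d2)" using cong_solve_coprime_nat[OF cop] by blast
  have big: "n \<in> Sg" if n: "n \<ge> d1*d2 + d2*NT" for n
  proof -
    define k0 where "k0 = (x*n) mod d2"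
    have k0: "k0 < d2" using d2pos by (simp add: k0_def)
    have "(d1*k0) mod d2 = (d1*(x*n)) mod d2" unfolding k0_def by (simp add: mod_mult_right_eq)
    also have "\<dots> = ((d1*x)*n) mod d2" by (simp add: mult.assoc)
    also have "\<dots> = (((d1*x) mod d2)*n) mod d2" by (simp add: mod_mult_left_eq)
    also have "\<dots> = ((Suc 0 mod d2)*n) mod d2" using x by (simp add: cong_def)
    also have "\<dots> = n mod d2" using mod_mult_left_eq[of "Suc 0" d2 n] by simp
    finally have md: "n mod d2 = (d1*k0) mod d2" by simp
    have "d1*k0 \<le> d1*d2" using k0 by simp
    then have le: "d1*k0 \<le> n" using n by linarith
    then have "d2 dvd n - d1*k0" using md mod_eq_dvd_iff_nat by blast
    then obtain t where t: "n - d1*k0 = d2*t" by (auto simp: dvd_def)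
    have "d2*t \<ge> d2*NT" using t n \<open>d1*k0 \<le> d1*d2\<close> by linarith
    then have "t \<ge> NT" using d2pos by simp
    then have "t \<in> T" using NT by blast
    moreover have "n = d2*t + d1*k0" using t le by simp
    ultimately show ?thesis by (auto simp: gl_iff)
  qed
  have "UNIV - Sg \<subseteq> {..<d1*d2 + d2*NT}"
  proof
    fix n assume "n \<in> UNIV - Sg"
    then have "\<not> n \<ge> d1*d2 + d2*NT" using big by blast
    then show "n \<in> {..<d1*d2 + d2*NT}" by simp
  qed
  then have "finite (UNIV - Sg)" using finite_subset by blast
  then show ?thesis using z c by (simp add: numerical_semigroup_def)
qed

sublocale S: ns Sg by (rule ns.intro, rule gl_ns)

lemma gl_m: "multiplicity_ns Sg = d2 * mT"
  unfolding multiplicity_ns_def[of Sg]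
proof (rule Least_equality)
  show "d2 * mT \<in> Sg \<and> d2 * mT \<noteq> 0"
    using T.m_in T.m_pos d2pos by (auto simp: gl_iff intro: exI[of _ 0])
next
  fix y assume y: "y \<in> Sg \<and> y \<noteq> 0"
  then obtain t k where tk: "t \<in> T" "y = d2*t + d1*k" by (auto simp: gl_iff)
  show "d2 * mT \<le> y"
  proof (cases "k = 0")
    case True
    then have "t \<noteq> 0" using y tk by auto
    then have "mT \<le> t" using T.m_le tk(1) by blast
    then show ?thesis using tk True by simp
  next
    case False
    then have "d1 \<le> d1*k" by simp
    then show ?thesis using tk d1big by linarith
  qed
qed

lemma gl_ap: "x \<in> apery Sg \<longleftrightarrow> (\<exists>w k. w \<in> apery T \<and> k < d2 \<and> x = d2*w + d1*k)"
proof
  assume x: "x \<in> apery Sg"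
  then have xS: "x \<in> Sg" and nx: "\<not> (d2*mT \<le> x \<and> x - d2*mT \<in> Sg)"
    by (auto simp: S.ap_iff gl_m)
  obtain t k where tk: "t \<in> T" "k < d2" "x = d2*t + d1*k" using gl_red[OF xS] by blast
  have "t \<in> apery T"
  proof (rule ccontr)
    assume "t \<notin> apery T"
    then have "mT \<le> t" "t - mT \<in> T" using tk(1) by (auto simp: T.ap_iff)
    moreover have "d2*mT \<le> d2*t" using \<open>mT \<le> t\<close> by simp
    ultimately have "x - d2*mT = d2*(t - mT) + d1*k" using tk(3)
      by (auto simp: diff_mult_distrib2)
    moreover have "d2*mT \<le> x" using tk(3) \<open>d2*mT \<le> d2*t\<close> by linarith
    ultimately show False using nx \<open>t - mT \<in> T\<close> by (auto simp: gl_iff)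
  qed
  then show "\<exists>w k. w \<in> apery T \<and> k < d2 \<and> x = d2*w + d1*k" using tk by blast
next
  assume "\<exists>w k. w \<in> apery T \<and> k < d2 \<and> x = d2*w + d1*k"
  then obtain w k where wk: "w \<in> apery T" "k < d2" "x = d2*w + d1*k" by blast
  have wT: "w \<in> T" using wk(1) by (simp add: T.ap_iff)
  have xS: "x \<in> Sg" using wk wT by (auto simp: gl_iff)
  show "x \<in> apery Sg"
  proof (rule ccontr)
    assume "x \<notin> apery Sg"
    then have "d2*mT \<le> x" "x - d2*mT \<in> Sg" using xS by (auto simp: S.ap_iff gl_m)
    then obtain t k' where tk: "t \<in> T" "x - d2*mT = d2*t + d1*k'" by (auto simp: gl_iff)
    have "d2*w + d1*k = d2*(t + mT) + d1*k'" using tk(2) wk(3) \<open>d2*mT \<le> x\<close>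
      by (simp add: algebra_simps)
    then obtain j where j: "k' = k + d2*j" "w = t + mT + d1*j" using key_eq[OF cop _ wk(2)] by blast
    then have "mT \<le> w" "w - mT = t + d1*j" by auto
    moreover have "t + d1*j \<in> T" using T.add_in[OF tk(1) T.mult_in[OF d1T, of j]] by (simp add: mult.commute)
    ultimately show False using wk(1) by (auto simp: T.ap_iff)
  qed
qed

lemma gl_ap_d2: "d2*y \<in> apery Sg \<longleftrightarrow> y \<in> apery T"
proof
  assume "d2*y \<in> apery Sg"
  then obtain w k where wk: "w \<in> apery T" "k < d2" "d2*y = d2*w + d1*k" by (auto simp: gl_ap)
  then have "d2*w + d1*k = d2*y + d1*0" by simp
  then obtain j where "0 = k + d2*j" "w = y + d1*j" using key_eq[OF cop _ wk(2)] by blast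
  then show "y \<in> apery T" using wk(1) d2pos by simp
next
  assume "y \<in> apery T" then show "d2*y \<in> apery Sg" unfolding gl_ap
    by (intro exI[of _ y] exI[of _ 0]) (simp add: d2pos)
qed

lemma gl_ap_d1: "j*d1 \<in> apery Sg \<longleftrightarrow> j < d2"
proof
  assume "j*d1 \<in> apery Sg"
  then obtain w k where wk: "w \<in> apery T" "k < d2" "j*d1 = d2*w + d1*k" by (auto simp: gl_ap)
  then have "d2*w + d1*k = d2*0 + d1*j" by (simp add: mult.commute)
  from key_eq[OF cop this wk(2)] obtain i where i: "j = k + d2*i" "w = d1*i" by auto
  show "j < d2"
  proof (cases i)
    case 0 then show ?thesis using i wk by simp
  next
    case (Suc i')
    have d: "mT \<le> d1" "d1 - mT \<in> T" using d1nap d1T by (auto simp: T.ap_iff)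
    have "w = d1 + d1*i'" using i Suc by simp
    then have e: "mT \<le> w" "w - mT = (d1 - mT) + d1*i'" using d by auto
    have r: "(d1 - mT) + d1*i' \<in> T" using T.add_in[OF d(2) T.mult_in[OF d1T, of i']] by (simp add: mult.commute)
    have "w - mT \<in> T" using e(2) r by simp
    then show ?thesis using wk(1) e(1) unfolding T.ap_iff by blast
  qed
next
  assume "j < d2"
  then show "j*d1 \<in> apery Sg" unfolding gl_ap
    by (intro exI[of _ 0] exI[of _ j]) (simp add: T.zero_ap mult.commute)
qed

lemma gl_alpha_d1: "alpha_ns Sg d1 = d2 - 1"
  unfolding alpha_ns_def
proof (rule Greatest_equality)
  show "(d2 - 1) * d1 \<in> apery Sg" using gl_ap_d1 d2pos by simp
next
  fix y assume "y * d1 \<in> apery Sg" then show "y \<le> d2 - 1" using gl_ap_d1 by simp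
qed

lemma gl_alpha_d2: "alpha_ns Sg (d2*u) = alpha_ns T u"
proof -
  have "\<And>j. j*(d2*u) \<in> apery Sg \<longleftrightarrow> j*u \<in> apery T"
    by (metis gl_ap_d2 mult.left_commute)
  then show ?thesis by (simp add: alpha_ns_def)
qed

lemma d1_in: "d1 \<in> Sg" unfolding gl_iff
  by (rule exI[of _ 0], rule exI[of _ 1]) (simp add: T.zero_in)

lemma gl_mg: "min_gens Sg = insert d1 ((*) d2 ` min_gens T)"
proof (intro equalityI subsetI)
  fix x assume x: "x \<in> min_gens Sg"
  then have xS: "x \<in> Sg" "x \<noteq> 0" and xm: "\<not> (\<exists>a\<in>Sg. \<exists>b\<in>Sg. a \<noteq> 0 \<and> b \<noteq> 0 \<and> x = a + b)"
    by (auto simp: S.mg_iff)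
  obtain t k where tk: "t \<in> T" "x = d2*t + d1*k" using xS(1) by (auto simp: gl_iff)
  show "x \<in> insert d1 ((*) d2 ` min_gens T)"
  proof (cases "k = 0")
    case False
    then obtain k' where k': "k = Suc k'" by (cases k) auto
    have "x = d1"
    proof (rule ccontr)
      assume "x \<noteq> d1"
      have xe: "x = d1 + (d2*t + d1*k')" using tk k' by simp
      have i1: "d2*t + d1*k' \<in> Sg" using tk(1) by (rule gl_mk)
      have i2: "d2*t + d1*k' \<noteq> 0" using \<open>x \<noteq> d1\<close> xe by auto
      have i3: "d1 \<noteq> 0" using d1pos by simp
      show False using not_mg_intro[OF d1_in i1 i3 i2] x xe by simp
    qed
    then show ?thesis by simp
  next
    case True
    have "t \<in> min_gens T"
      unfolding T.mg_iff
    proof (intro conjI)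
      show "t \<in> T" by fact
      show "t \<noteq> 0" using xS tk True by auto
      show "\<not> (\<exists>a\<in>T. \<exists>b\<in>T. a \<noteq> 0 \<and> b \<noteq> 0 \<and> t = a + b)"
      proof
        assume "\<exists>a\<in>T. \<exists>b\<in>T. a \<noteq> 0 \<and> b \<noteq> 0 \<and> t = a + b"
        then obtain a b where ab: "a \<in> T" "b \<in> T" "a \<noteq> 0" "b \<noteq> 0" "t = a + b" by blast
        have i1: "d2*a \<in> Sg" "d2*b \<in> Sg" using ab(1,2) by (auto intro: gl_d2)
        have xe: "x = d2*a + d2*b" using tk True ab by (simp add: algebra_simps)
        have i2: "d2*a \<noteq> 0" "d2*b \<noteq> 0" using ab d2pos by auto
        show False using not_mg_intro[OF i1 i2] x xe by simp
      qed
    qed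
    then have "d2*t \<in> (*) d2 ` min_gens T" by (rule imageI)
    moreover have "x = d2*t" using tk True by simp
    ultimately show ?thesis by simp
  qed
next
  fix x assume x: "x \<in> insert d1 ((*) d2 ` min_gens T)"
  show "x \<in> min_gens Sg"
  proof (cases "x = d1")
    case True
    show ?thesis unfolding S.mg_iff True
    proof (intro conjI)
      show "d1 \<in> Sg" by (rule d1_in)
      show "d1 \<noteq> 0" using d1pos by simp
      show "\<not> (\<exists>a\<in>Sg. \<exists>b\<in>Sg. a \<noteq> 0 \<and> b \<noteq> 0 \<and> d1 = a + b)"
      proof
        assume "\<exists>a\<in>Sg. \<exists>b\<in>Sg. a \<noteq> 0 \<and> b \<noteq> 0 \<and> d1 = a + b"
        then obtain a b where ab: "a \<in> Sg" "b \<in> Sg" "a \<noteq> 0" "b \<noteq> 0" "d1 = a + b" by blast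
        obtain ta ka where a: "ta \<in> T" "a = d2*ta + d1*ka" using ab(1) by (auto simp: gl_iff)
        obtain tb kb where b: "tb \<in> T" "b = d2*tb + d1*kb" using ab(2) by (auto simp: gl_iff)
        have "ka = 0"
        proof (rule ccontr)
          assume "ka \<noteq> 0" then have "d1 \<le> d1*ka" by simp
          then have "d1 \<le> a" using a by linarith
          then show False using ab by simp
        qed
        moreover have "kb = 0"
        proof (rule ccontr)
          assume "kb \<noteq> 0" then have "d1 \<le> d1*kb" by simp
          then have "d1 \<le> b" using b by linarith
          then show False using ab by simp
        qed
        ultimately have "a = d2*ta" "b = d2*tb" using a(2) b(2) by simp_all
        then have "d1 = d2*(ta+tb)" using ab(5) by (simp add: algebra_simps)
        then show False using d2_ndvd_d1 by simp
      qed
    qed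
  next
    case False
    then obtain u where u: "u \<in> min_gens T" "x = d2*u" using x by auto
    have uT: "u \<in> T" "u \<noteq> 0" and um: "\<not> (\<exists>a\<in>T. \<exists>b\<in>T. a \<noteq> 0 \<and> b \<noteq> 0 \<and> u = a + b)"
      using u(1) by (auto simp: T.mg_iff)
    show ?thesis unfolding S.mg_iff
    proof (intro conjI)
      show "x \<in> Sg" using u(2) gl_d2[OF uT(1)] by simp
      show "x \<noteq> 0" using u uT d2pos by simp
      show "\<not> (\<exists>a\<in>Sg. \<exists>b\<in>Sg. a \<noteq> 0 \<and> b \<noteq> 0 \<and> x = a + b)"
      proof
        assume "\<exists>a\<in>Sg. \<exists>b\<in>Sg. a \<noteq> 0 \<and> b \<noteq> 0 \<and> x = a + b"
        then obtain a b where ab: "a \<in> Sg" "b \<in> Sg" "a \<noteq> 0" "b \<noteq> 0" "x = a + b" by blast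
        obtain ta ka where a: "ta \<in> T" "a = d2*ta + d1*ka" using ab(1) by (auto simp: gl_iff)
        obtain tb kb where b: "tb \<in> T" "b = d2*tb + d1*kb" using ab(2) by (auto simp: gl_iff)
        have "d2*u + d1*0 = d2*(ta+tb) + d1*(ka+kb)" using u ab a b by (simp add: algebra_simps)
        from key_eq[OF cop this d2pos] obtain j where j: "ka + kb = d2*j" "u = ta + tb + d1*j"
          by auto
        show False
        proof (cases j)
          case 0
          then have "ka = 0" "kb = 0" using j by auto
          then have "ta \<noteq> 0" "tb \<noteq> 0" "u = ta + tb" using a(2) b(2) ab(3,4) j(2) 0 by auto
          then show False using not_mg_intro[OF a(1) b(1)] u(1) by simp
        next
          case (Suc j')
          define r where "r = ta + tb + d1*j'"
          have ur: "u = r + d1" using j Suc by (simp add: r_def)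
          have rT: "r \<in> T" unfolding r_def using T.add_in[OF T.add_in[OF a(1) b(1)] T.mult_in[OF d1T, of j']]
            by (simp add: mult.commute)
          show False
          proof (cases "r = 0")
            case True
            then have "u = d1" using ur by simp
            then show False using u(1) d1ng by simp
          next
            case False
            moreover have "d1 \<noteq> 0" using d1pos by simp
            ultimately show False using not_mg_intro[OF rT d1T] u(1) ur by simp
          qed
        qed
      qed
    qed
  qed
qed

lemma d1_notin_img: "d1 \<notin> (*) d2 ` X"
proof
  assume "d1 \<in> (*) d2 ` X"
  then obtain y where "d1 = d2*y" by blast
  then show False using d2_ndvd_d1 by simp
qed

lemma gl_og: "other_gens Sg = insert d1 ((*) d2 ` other_gens T)"
proof -
  have ne: "d1 \<noteq> d2*mT" using d1big by simp
  have inj: "inj ((*) d2)" using d2pos by (auto simp: inj_def)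
  have "other_gens Sg = insert d1 ((*) d2 ` min_gens T) - {d2*mT}" by (simp add: other_gens_def gl_mg gl_m)
  also have "\<dots> = insert d1 ((*) d2 ` min_gens T - (*) d2 ` {mT})" using ne by auto
  also have "\<dots> = insert d1 ((*) d2 ` (min_gens T - {mT}))" using image_set_diff[OF inj] by simp
  finally show ?thesis by (simp add: other_gens_def)
qed

lemma gl_sum: "(\<Sum>h\<in>other_gens Sg. lam h * h) = lam d1 * d1 + d2 * (\<Sum>u\<in>other_gens T. lam (d2*u) * u)"
proof -
  have fin: "finite ((*) d2 ` other_gens T)" using T.og_finite by simp
  have inj: "inj_on ((*) d2) (other_gens T)" using d2pos by (auto simp: inj_on_def)
  have "(\<Sum>h\<in>other_gens Sg. lam h * h) = lam d1 * d1 + (\<Sum>h\<in>(*) d2 ` other_gens T. lam h * h)"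
    unfolding gl_og using fin d1_notin_img by simp
  also have "(\<Sum>h\<in>(*) d2 ` other_gens T. lam h * h) = (\<Sum>u\<in>other_gens T. lam (d2*u) * (d2*u))"
    using sum.reindex[OF inj] by simp
  also have "\<dots> = d2 * (\<Sum>u\<in>other_gens T. lam (d2*u) * u)"
    unfolding sum_distrib_left by (rule sum.cong) (simp_all add: mult.left_commute)
  finally show ?thesis .
qed

lemma gl_rect: "alpha_rectangular Sg"
proof -
  have rT: "apery T = {(\<Sum>u\<in>other_gens T. lam u * u) | lam. \<forall>u\<in>other_gens T. lam u \<le> alpha_ns T u}"
    using rectT by (simp add: alpha_rectangular_def)
  have d1og: "d1 \<in> other_gens Sg" by (simp add: gl_og)
  have d2og: "u \<in> other_gens T \<Longrightarrow> d2*u \<in> other_gens Sg" for u unfolding gl_og by (intro insertI2 imageI)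
  have "apery Sg = {(\<Sum>h\<in>other_gens Sg. lam h * h) | lam. \<forall>h\<in>other_gens Sg. lam h \<le> alpha_ns Sg h}"
  proof (intro equalityI subsetI)
    fix x assume "x \<in> apery Sg"
    then obtain w k where wk: "w \<in> apery T" "k < d2" "x = d2*w + d1*k" unfolding gl_ap by blast
    have "w \<in> {(\<Sum>u\<in>other_gens T. lam u * u) | lam. \<forall>u\<in>other_gens T. lam u \<le> alpha_ns T u}"
      using wk(1) unfolding rT .
    then obtain lT where lT: "w = (\<Sum>u\<in>other_gens T. lT u * u)" "\<forall>u\<in>other_gens T. lT u \<le> alpha_ns T u"
      by blast
    define lam where "lam h = (if h = d1 then k else lT (h div d2))" for h
    have l1: "lam (d2*u) = lT u" for u
    proof -
      have "d2*u \<noteq> d1" using d2_ndvd_d1 by (metis dvd_triv_left)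
      then show ?thesis using d2pos by (simp add: lam_def)
    qed
    have l0: "lam d1 = k" by (simp add: lam_def)
    have "(\<Sum>u\<in>other_gens T. lam (d2*u) * u) = w" using lT(1) l1 by simp
    then have A: "x = (\<Sum>h\<in>other_gens Sg. lam h * h)"
      unfolding gl_sum using wk(3) l0 by simp
    have B: "\<forall>h\<in>other_gens Sg. lam h \<le> alpha_ns Sg h"
    proof
      fix h assume "h \<in> other_gens Sg"
      then have "h = d1 \<or> (\<exists>u\<in>other_gens T. h = d2*u)" unfolding gl_og by blast
      then show "lam h \<le> alpha_ns Sg h"
      proof
        assume "h = d1" then show ?thesis using wk(2) gl_alpha_d1 l0 by simp
      next
        assume "\<exists>u\<in>other_gens T. h = d2*u"
        then obtain u where u: "u \<in> other_gens T" "h = d2*u" by blast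
        have "lT u \<le> alpha_ns T u" using lT(2) u(1) by blast
        then show ?thesis using u(2) l1 gl_alpha_d2 by simp
      qed
    qed
    show "x \<in> {(\<Sum>h\<in>other_gens Sg. lam h * h) | lam. \<forall>h\<in>other_gens Sg. lam h \<le> alpha_ns Sg h}"
      using A B by blast
  next
    fix x assume "x \<in> {(\<Sum>h\<in>other_gens Sg. lam h * h) | lam. \<forall>h\<in>other_gens Sg. lam h \<le> alpha_ns Sg h}"
    then obtain lam where l: "x = (\<Sum>h\<in>other_gens Sg. lam h * h)" "\<forall>h\<in>other_gens Sg. lam h \<le> alpha_ns Sg h"
      by blast
    define w where "w = (\<Sum>u\<in>other_gens T. lam (d2*u) * u)"
    have "\<forall>u\<in>other_gens T. lam (d2*u) \<le> alpha_ns T u"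
    proof
      fix u assume "u \<in> other_gens T"
      then have "lam (d2*u) \<le> alpha_ns Sg (d2*u)" using l(2) d2og by blast
      then show "lam (d2*u) \<le> alpha_ns T u" using gl_alpha_d2 by simp
    qed
    then have "w \<in> {(\<Sum>u\<in>other_gens T. lam u * u) | lam. \<forall>u\<in>other_gens T. lam u \<le> alpha_ns T u}"
      unfolding w_def by (intro CollectI exI[of _ "\<lambda>u. lam (d2*u)"]) simp
    then have wA: "w \<in> apery T" unfolding rT .
    have "lam d1 \<le> d2 - 1" using l(2) d1og gl_alpha_d1 by force
    then have kl: "lam d1 < d2" using d2pos by linarith
    have xe: "x = d2*w + d1*lam d1" using l(1) gl_sum w_def by (simp add: mult.commute)
    show "x \<in> apery Sg" unfolding gl_ap using wA kl xe by blast
  qed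
  then show ?thesis by (simp add: alpha_rectangular_def)
qed

end

lemma partA:
  "\<forall>T d1 d2. numerical_semigroup T \<and> alpha_rectangular T \<and>
            0 < d1 \<and> 0 < d2 \<and> coprime d1 d2 \<and> d1 \<in> T \<and> d1 \<notin> min_gens T \<and>
            2 \<le> d2 \<and> d1 \<notin> apery T \<and> d1 > d2 * multiplicity_ns T
          \<longrightarrow> numerical_semigroup (gluing_N d2 T d1) \<and> alpha_rectangular (gluing_N d2 T d1)"
proof (intro allI impI)
  fix T d1 d2 assume a: "numerical_semigroup T \<and> alpha_rectangular T \<and>
            0 < d1 \<and> 0 < d2 \<and> coprime d1 d2 \<and> d1 \<in> T \<and> d1 \<notin> min_gens T \<and>
            2 \<le> d2 \<and> d1 \<notin> apery T \<and> d1 > d2 * multiplicity_ns T"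
  then interpret glue T d1 d2 by (unfold_locales) auto
  show "numerical_semigroup (gluing_N d2 T d1) \<and> alpha_rectangular (gluing_N d2 T d1)"
    using gl_ns gl_rect by simp
qed



context ns
begin

definition wsum :: "(nat \<Rightarrow> nat) \<Rightarrow> nat" where
  "wsum lam = (\<Sum>h\<in>other_gens S. lam h * h)"

definition boxed :: "(nat \<Rightarrow> nat) \<Rightarrow> bool" where
  "boxed lam \<longleftrightarrow> (\<forall>h\<in>other_gens S. lam h \<le> alpha_ns S h)"

lemma wsum_in: "wsum n \<in> S"
  unfolding wsum_def by (rule sum_in) (simp add: mult_in og_props(1))

lemma wsum_add: "wsum (\<lambda>y. a y + b y) = wsum a + wsum b"
  unfolding wsum_def by (simp add: distrib_right sum.distrib)

lemma wsum_zero: "wsum (\<lambda>_. 0) = 0"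
  unfolding wsum_def by simp

lemma wsum_rem: "h \<in> other_gens S \<Longrightarrow> wsum lam = lam h * h + (\<Sum>y\<in>other_gens S - {h}. lam y * y)"
  unfolding wsum_def by (rule sum.remove[OF og_finite])

lemma wsum_split: "h \<in> other_gens S \<Longrightarrow> wsum lam = lam h * h + wsum (lam(h := 0))"
proof -
  assume h: "h \<in> other_gens S"
  have "(\<Sum>y\<in>other_gens S - {h}. (lam(h := 0)) y * y) = (\<Sum>y\<in>other_gens S - {h}. lam y * y)"
    by (rule sum.cong) auto
  then have "wsum (lam(h := 0)) = (\<Sum>y\<in>other_gens S - {h}. lam y * y)"
    using wsum_rem[OF h, of "lam(h := 0)"] by simp
  then show ?thesis using wsum_rem[OF h, of lam] by simp
qed

lemma wsum_single: "h \<in> other_gens S \<Longrightarrow> wsum (\<lambda>y. if y = h then 1 else 0) = h"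
proof -
  assume h: "h \<in> other_gens S"
  have "(\<lambda>y. if y = h then 1 else 0 :: nat)(h := 0) = (\<lambda>_. 0)" by auto
  then show ?thesis using wsum_split[OF h, of "\<lambda>y. if y = h then 1 else 0"] wsum_zero by simp
qed

end

locale rect = ns +
  assumes rectS: "alpha_rectangular S" and notU: "S \<noteq> UNIV"
begin

abbreviation "OS \<equiv> other_gens S"
abbreviation "al \<equiv> alpha_ns S"

lemma ap_rect: "x \<in> apery S \<longleftrightarrow> (\<exists>lam. boxed lam \<and> x = wsum lam)"
proof -
  have "apery S = {(\<Sum>g\<in>OS. lam g * g) | lam. \<forall>g\<in>OS. lam g \<le> al g}"
    using rectS by (simp add: alpha_rectangular_def)
  then show ?thesis unfolding wsum_def boxed_def by blast
qed

lemma S_decomp: "s \<in> S \<Longrightarrow> \<exists>lam k. boxed lam \<and> s = wsum lam + k * m"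
proof -
  assume "s \<in> S"
  then obtain a k where ak: "a \<in> apery S" "s = a + k * m" using ap_decomp by blast
  then obtain lam where "boxed lam" "a = wsum lam" using ap_rect by blast
  then show ?thesis using ak(2) by blast
qed

lemma OS_ne: "OS \<noteq> {}"
proof
  assume e: "OS = {}"
  have w0: "wsum lam = 0" for lam by (simp add: wsum_def e)
  obtain N where N: "\<forall>n\<ge>N. n \<in> S" using large by blast
  have "N \<le> m * N" using m_pos by simp
  then have "m * N + 1 \<ge> N" by linarith
  then have "m * N + 1 \<in> S" using N by blast
  then obtain lam k where "m * N + 1 = wsum lam + k * m" using S_decomp by blast
  then have "m * N + 1 = k * m" using w0 by simp
  then have "1 + m * N = k * m" by simp
  then have a1: "(1 + m * N) mod m = 0" by simp
  have a2: "(1 + m * N) mod m = 1 mod m" by (rule mod_mult_self2)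
  have m1: "m = 1"
  proof (rule ccontr)
    assume "m \<noteq> 1" then have "1 < m" using m_pos by simp
    then have "1 mod m = 1" by simp
    then show False using a1 a2 by simp
  qed
  have "n \<in> S" for n using mult_in[OF m_in, of n] m1 by simp
  then show False using notU by blast
qed

lemma carry:
  assumes h: "h \<in> OS"
  shows "\<exists>mu c. boxed mu \<and> mu h = 0 \<and> c \<ge> 1 \<and> (al h + 1) * h = wsum mu + c * m"
proof -
  have h0: "h > 0" "h \<in> S" using og_props[OF h] by auto
  define x where "x = (al h + 1) * h"
  have xS: "x \<in> S" unfolding x_def using mult_in[OF h0(2)] .
  have "x \<notin> apery S" unfolding x_def by (rule alpha_props(3)[OF h0(1)])
  then have mx: "m \<le> x" "x - m \<in> S" using xS by (auto simp: ap_iff)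
  then obtain lam k where lk: "boxed lam" "x - m = wsum lam + k * m" using S_decomp by blast
  have xe: "x = wsum lam + (k + 1) * m" using lk(2) mx(1) by simp
  have "lam h = 0"
  proof (rule ccontr)
    assume "lam h \<noteq> 0"
    have le: "lam h \<le> al h" using lk(1) h by (simp add: boxed_def)
    define j where "j = al h + 1 - lam h"
    have j: "j \<ge> 1" "j \<le> al h" using le \<open>lam h \<noteq> 0\<close> by (auto simp: j_def)
    have "x = lam h * h + wsum (lam(h := 0)) + (k + 1) * m" using xe wsum_split[OF h, of lam] by simp
    moreover have "x = j * h + lam h * h"
    proof -
      have "al h + 1 = j + lam h" using le by (simp add: j_def)
      then show ?thesis unfolding x_def by (simp only: add_mult_distrib)
    qed
    ultimately have je: "j * h = wsum (lam(h := 0)) + (k + 1) * m" by simp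
    have "j * h \<in> apery S" using alpha_below[OF h0(2) h0(1) j(2)] .
    moreover have "m \<le> j * h" "j * h - m = wsum (lam(h := 0)) + k * m" using je by auto
    moreover have "wsum (lam(h := 0)) + k * m \<in> S" using add_in[OF wsum_in mult_in[OF m_in]] .
    ultimately show False by (auto simp: ap_iff)
  qed
  then show ?thesis using lk(1) xe x_def by (intro exI[of _ lam] exI[of _ "k+1"]) simp
qed

end


context rect
begin

definition MU :: "nat \<Rightarrow> nat \<Rightarrow> nat" where
  "MU h = (SOME mu. \<exists>c. boxed mu \<and> mu h = 0 \<and> c \<ge> 1 \<and> (al h + 1) * h = wsum mu + c * m)"

definition CC :: "nat \<Rightarrow> nat" where
  "CC h = (SOME c. boxed (MU h) \<and> MU h h = 0 \<and> c \<ge> 1 \<and> (al h + 1) * h = wsum (MU h) + c * m)"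

lemma MU_props:
  assumes h: "h \<in> OS"
  shows "boxed (MU h)" "MU h h = 0" "CC h \<ge> 1" "(al h + 1) * h = wsum (MU h) + CC h * m"
proof -
  have "\<exists>c. boxed (MU h) \<and> MU h h = 0 \<and> c \<ge> 1 \<and> (al h + 1) * h = wsum (MU h) + c * m"
    unfolding MU_def using someI_ex[OF carry[OF h]] .
  then have "boxed (MU h) \<and> MU h h = 0 \<and> CC h \<ge> 1 \<and> (al h + 1) * h = wsum (MU h) + CC h * m"
    unfolding CC_def by (rule someI_ex)
  then show "boxed (MU h)" "MU h h = 0" "CC h \<ge> 1" "(al h + 1) * h = wsum (MU h) + CC h * m"
    by auto
qed

lemma source_ex: "\<exists>g\<in>OS. \<forall>h\<in>OS. h \<noteq> g \<longrightarrow> MU h g = 0"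
proof (rule ccontr)
  assume "\<not> (\<exists>g\<in>OS. \<forall>h\<in>OS. h \<noteq> g \<longrightarrow> MU h g = 0)"
  then have H: "\<forall>g\<in>OS. \<exists>h\<in>OS. MU h g \<noteq> 0" by blast
  define K where "K y = (\<Sum>h\<in>OS. MU h y)" for y
  have fin: "finite OS" by (rule og_finite)
  have K1: "K y \<ge> 1" if y: "y \<in> OS" for y
  proof -
    obtain h where h: "h \<in> OS" "MU h y \<noteq> 0" using H y by blast
    have "MU h y \<le> K y" unfolding K_def by (rule member_le_sum[OF h(1) _ fin]) simp
    then show ?thesis using h(2) by linarith
  qed
  define Cs where "Cs = (\<Sum>h\<in>OS. CC h)"
  have e1: "(\<Sum>h\<in>OS. (al h + 1) * h) = (\<Sum>h\<in>OS. wsum (MU h) + CC h * m)"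
    by (rule sum.cong[OF refl], rule MU_props(4))
  also have "\<dots> = (\<Sum>h\<in>OS. wsum (MU h)) + Cs * m"
    by (simp add: sum.distrib Cs_def sum_distrib_right)
  finally have e1': "(\<Sum>h\<in>OS. (al h + 1) * h) = (\<Sum>h\<in>OS. wsum (MU h)) + Cs * m" .
  have "(\<Sum>h\<in>OS. wsum (MU h)) = (\<Sum>h\<in>OS. \<Sum>y\<in>OS. MU h y * y)" by (simp add: wsum_def)
  also have "\<dots> = (\<Sum>y\<in>OS. \<Sum>h\<in>OS. MU h y * y)" by (rule sum.swap)
  also have "\<dots> = (\<Sum>y\<in>OS. K y * y)" by (simp add: K_def sum_distrib_right)
  also have "\<dots> = (\<Sum>y\<in>OS. (K y - 1) * y + y)"
  proof (rule sum.cong)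
    fix y assume "y \<in> OS"
    then have "K y \<ge> 1" by (rule K1)
    then have "K y = (K y - 1) + 1" by linarith
    then show "K y * y = (K y - 1) * y + y" by (metis add_mult_distrib mult_1)
  qed simp
  also have "\<dots> = (\<Sum>y\<in>OS. (K y - 1) * y) + (\<Sum>y\<in>OS. y)" by (rule sum.distrib)
  finally have e2: "(\<Sum>h\<in>OS. wsum (MU h)) = (\<Sum>y\<in>OS. (K y - 1) * y) + (\<Sum>y\<in>OS. y)" .
  have e3: "(\<Sum>h\<in>OS. (al h + 1) * h) = wsum al + (\<Sum>y\<in>OS. y)"
    by (simp add: wsum_def sum.distrib)
  define R where "R = (\<Sum>y\<in>OS. (K y - 1) * y)"
  have eq: "wsum al = R + Cs * m" using e1' e2 e3 by (simp add: R_def)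
  obtain h0 where h0: "h0 \<in> OS" using OS_ne by blast
  have "CC h0 \<le> Cs" unfolding Cs_def by (rule member_le_sum[OF h0 _ fin]) simp
  then have Cs1: "Cs \<ge> 1" using MU_props(3)[OF h0] by linarith
  have RS: "R \<in> S" unfolding R_def by (rule sum_in) (simp add: mult_in og_props(1))
  have A: "wsum al \<in> apery S" using ap_rect boxed_def by blast
  obtain c' where c': "Cs = Suc c'" using Cs1 by (cases Cs) auto
  have eq': "wsum al = R + c' * m + m" using eq c' by simp
  have B: "m \<le> wsum al" using eq' by simp
  have "wsum al - m = R + c' * m" using eq' by simp
  moreover have "R + c' * m \<in> S" using add_in[OF RS mult_in[OF m_in]] .
  ultimately have C: "wsum al - m \<in> S" by simp
  show False using A B C ap_iff by blast
qed

end


lemma kcancel_le: "(k::nat) > 0 \<Longrightarrow> k * a \<le> k * b \<Longrightarrow> a \<le> b" by simp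
lemma kcancel_eq: "(k::nat) > 0 \<Longrightarrow> k * a = k * b \<Longrightarrow> a = b" by simp
lemma kdiv: "(k::nat) > 0 \<Longrightarrow> a = (k * a) div k" by simp

lemma mod_cancel_nat: "(a + c) mod m = (b + c) mod m \<Longrightarrow> a mod m = (b::nat) mod m"
  using cong_add_rcancel_nat[of a c b m] unfolding cong_def by simp

locale src = rect +
  fixes g :: nat
  assumes gOS: "g \<in> OS" and gsrc: "\<forall>h\<in>OS. h \<noteq> g \<longrightarrow> MU h g = 0"
begin

abbreviation "dd \<equiv> al g + 1"

lemma g_props: "g \<in> S" "g > m" "g > 0" "al g \<ge> 1" "dd \<ge> 2"
  using og_props[OF gOS] by auto

lemma reduce_aux:
  "\<forall>n. wsum n = v \<longrightarrow> n g = 0 \<longrightarrow> (\<exists>lam k. boxed lam \<and> lam g = 0 \<and> wsum n = wsum lam + k * m)"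
proof (induction v rule: less_induct)
  case (less v)
  show ?case
  proof (intro allI impI)
    fix n assume nv: "wsum n = v" and ng: "n g = 0"
    show "\<exists>lam k. boxed lam \<and> lam g = 0 \<and> wsum n = wsum lam + k * m"
    proof (cases "boxed n")
      case True
      then show ?thesis using ng by (intro exI[of _ n] exI[of _ 0]) simp
    next
      case False
      then obtain h where h: "h \<in> OS" "n h > al h" unfolding boxed_def by (auto simp: not_le)
      have hg: "h \<noteq> g" using h(2) ng by auto
      define a where "a = n h - (al h + 1)"
      have na: "n h = a + (al h + 1)" using h(2) by (simp add: a_def)
      define n1 where "n1 = n(h := a)"
      define n' where "n' = (\<lambda>y. n1 y + MU h y)"
      have s1: "wsum n = n h * h + wsum (n(h := 0))" by (rule wsum_split[OF h(1)])
      have s2: "wsum n1 = a * h + wsum (n(h := 0))"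
        using wsum_split[OF h(1), of n1] by (simp add: n1_def)
      have w1: "wsum n = wsum n1 + (al h + 1) * h"
        using s1 s2 na by (simp add: add_mult_distrib)
      have w2: "wsum n' = wsum n1 + wsum (MU h)" unfolding n'_def by (rule wsum_add)
      have w3: "wsum n = wsum n' + CC h * m" using w1 w2 MU_props(4)[OF h(1)] by simp
      have "CC h * m \<ge> m" using MU_props(3)[OF h(1)] by simp
      then have lt: "wsum n' < v" using w3 nv m_pos by linarith
      have n'g: "n' g = 0" using hg ng gsrc h(1) by (simp add: n'_def n1_def)
      obtain lam k where lk: "boxed lam" "lam g = 0" "wsum n' = wsum lam + k * m"
        using less.IH[OF lt] n'g by blast
      have "wsum n = wsum lam + (k + CC h) * m" using w3 lk(3) by (simp add: add_mult_distrib)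
      then show ?thesis using lk(1,2) by blast
    qed
  qed
qed

lemma reduce: "n g = 0 \<Longrightarrow> \<exists>lam k. boxed lam \<and> lam g = 0 \<and> wsum n = wsum lam + k * m"
  using reduce_aux by blast

lemma jlemma:
  assumes j: "1 \<le> j" "j \<le> al g" and ng: "n g = 0" and md: "(j * g) mod m = (wsum n) mod m"
  shows False
proof -
  define A' where "A' = {wsum lam | lam. boxed lam \<and> lam g = 0}"
  have sub: "A' \<subseteq> apery S" unfolding A'_def using ap_rect by blast
  have fin: "finite A'" using finite_subset[OF sub ap_finite] .
  have "boxed (\<lambda>_. 0)" by (simp add: boxed_def)
  then have "wsum (\<lambda>_. 0) \<in> A'" unfolding A'_def by blast
  then have ne: "A' \<noteq> {}" by blast
  have "Max A' \<in> A'" using Max_in[OF fin ne] .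
  then have "\<exists>ls. boxed ls \<and> ls g = 0 \<and> wsum ls = Max A'" unfolding A'_def by force
  then obtain ls where ls: "boxed ls" "ls g = 0" "wsum ls = Max A'" by blast
  define ls' where "ls' = ls(g := j)"
  have b': "boxed ls'" using ls(1) j(2) by (simp add: boxed_def ls'_def)
  have "ls'(g := 0) = ls" using fun_upd_idem[of ls g 0, OF ls(2)] by (simp add: ls'_def)
  then have wy: "wsum ls' = j * g + wsum ls" using wsum_split[OF gOS, of ls'] by (simp add: ls'_def)
  have yA: "j * g + wsum ls \<in> apery S" using ap_rect b' wy by metis
  define n2 where "n2 = (\<lambda>y. ls y + n y)"
  have n2g: "n2 g = 0" using ls(2) ng by (simp add: n2_def)
  have w2: "wsum n2 = wsum ls + wsum n" unfolding n2_def by (rule wsum_add)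
  obtain l3 k where l3: "boxed l3" "l3 g = 0" "wsum n2 = wsum l3 + k * m" using reduce[of n2, OF n2g] by blast
  have l3A: "wsum l3 \<in> A'" unfolding A'_def using l3(1,2) by blast
  have l3ap: "wsum l3 \<in> apery S" using sub l3A by blast
  have "(j * g + wsum ls) mod m = ((j * g) mod m + wsum ls) mod m" by (simp add: mod_add_left_eq)
  also have "\<dots> = ((wsum n) mod m + wsum ls) mod m" using md by simp
  also have "\<dots> = (wsum n + wsum ls) mod m" by (simp add: mod_add_left_eq)
  also have "\<dots> = (wsum l3 + k * m) mod m" using w2 l3(3) by (simp add: add.commute)
  also have "\<dots> = wsum l3 mod m" by simp
  finally have "j * g + wsum ls = wsum l3" using ap_unique[OF yA l3ap] by blast
  moreover have "wsum l3 \<le> Max A'" using Max_ge[OF fin l3A] .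
  moreover have "j * g > 0" using j(1) g_props(3) by simp
  ultimately show False using ls(3) by linarith
qed

definition inH :: "nat \<Rightarrow> bool" where
  "inH x \<longleftrightarrow> (\<exists>n. n g = 0 \<and> x mod m = wsum n mod m)"

lemma inH_cong: "inH x \<Longrightarrow> x mod m = y mod m \<Longrightarrow> inH y"
  unfolding inH_def by metis

lemma inH_w: "n g = 0 \<Longrightarrow> inH (wsum n)"
  unfolding inH_def by blast

lemma inH_zero: "inH 0"
  using inH_w[of "\<lambda>_. 0"] wsum_zero by simp

lemma inH_add: "inH x \<Longrightarrow> inH y \<Longrightarrow> inH (x + y)"
proof -
  assume "inH x" "inH y"
  then obtain n1 n2 where n: "n1 g = 0" "x mod m = wsum n1 mod m" "n2 g = 0" "y mod m = wsum n2 mod m"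
    unfolding inH_def by blast
  have "(x + y) mod m = (x mod m + y mod m) mod m" by (simp add: mod_add_eq)
  also have "\<dots> = (wsum n1 mod m + wsum n2 mod m) mod m" using n by simp
  also have "\<dots> = (wsum n1 + wsum n2) mod m" by (simp add: mod_add_eq)
  also have "\<dots> = wsum (\<lambda>z. n1 z + n2 z) mod m" by (simp add: wsum_add)
  finally show "inH (x + y)" unfolding inH_def using n(1,3) by (intro exI[of _ "\<lambda>z. n1 z + n2 z"]) simp
qed

lemma inH_mult: "inH x \<Longrightarrow> inH (c * x)"
proof (induction c)
  case 0 then show ?case using inH_zero by simp
next
  case (Suc c) then show ?case using inH_add[of x "c * x"] by simp
qed

lemma inH_m: "inH m"
  using inH_zero inH_cong[of 0 m] by simp

lemma inH_h: "h \<in> OS \<Longrightarrow> h \<noteq> g \<Longrightarrow> inH h"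
  using inH_w[of "\<lambda>y. if y = h then 1 else 0"] wsum_single by auto

lemma inH_dg: "inH (dd * g)"
proof -
  have "dd * g = wsum (MU g) + CC g * m" using MU_props(4)[OF gOS] .
  then have "(dd * g) mod m = wsum (MU g) mod m" by simp
  then show ?thesis using inH_cong[OF inH_w[of "MU g", OF MU_props(2)[OF gOS]]] by simp
qed

lemma inH_sub: "inH (x + y) \<Longrightarrow> inH y \<Longrightarrow> inH x"
proof -
  assume a: "inH (x + y)" "inH y"
  have "inH ((x + y) + (m - 1) * y)" using inH_add[OF a(1) inH_mult[OF a(2)]] .
  moreover have "(x + y) + (m - 1) * y = x + m * y"
  proof -
    have "y + (m - 1) * y = m * y" using m_pos by (cases m) auto
    then show ?thesis by simp
  qed
  moreover have "(x + m * y) mod m = x mod m" by (rule mod_mult_self2)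
  ultimately show "inH x" using inH_cong by metis
qed

lemma dvd_of_inH: "inH (j * g) \<Longrightarrow> dd dvd j"
proof -
  assume a: "inH (j * g)"
  define q r where "q = j div dd" and "r = j mod dd"
  have jr: "j = r + q * dd" unfolding q_def r_def by (rule mod_div_mult_eq[symmetric])
  have "j * g = r * g + q * (dd * g)" using jr by (simp add: algebra_simps)
  then have "inH (r * g + q * (dd * g))" using a by simp
  then have rg: "inH (r * g)" using inH_sub inH_mult[OF inH_dg] by blast
  have "r = 0"
  proof (rule ccontr)
    assume "r \<noteq> 0"
    moreover have "r < dd" by (simp add: r_def)
    moreover obtain n where "n g = 0" "(r * g) mod m = wsum n mod m" using rg unfolding inH_def by blast
    ultimately show False using jlemma[of r n] by simp
  qed
  then show "dd dvd j" by (simp add: r_def dvd_eq_mod_eq_0)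
qed

lemma j0_ex: "\<exists>X j0. inH X \<and> 1 mod m = (X + j0 * g) mod m"
proof -
  obtain N where N: "\<forall>n\<ge>N. n \<in> S" using large by blast
  have "N \<le> m * N" using m_pos by simp
  then have "N \<le> 1 + m * N" by linarith
  then have "1 + m * N \<in> S" using N by blast
  then obtain lam k where lk: "boxed lam" "1 + m * N = wsum lam + k * m" using S_decomp by blast
  have ws: "wsum lam = lam g * g + wsum (lam(g := 0))" by (rule wsum_split[OF gOS])
  have "1 mod m = (1 + m * N) mod m" by (rule mod_mult_self2[symmetric])
  also have "\<dots> = (wsum (lam(g := 0)) + lam g * g + k * m) mod m" using lk(2) ws by (simp add: add.commute)
  also have "\<dots> = (wsum (lam(g := 0)) + lam g * g) mod m" by simp
  finally show ?thesis using inH_w[of "lam(g := 0)"] by auto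
qed

lemma main_dvd: "inH x \<Longrightarrow> dd dvd x" and cop_dg: "coprime dd g"
proof -
  obtain X j0 where X: "inH X" "1 mod m = (X + j0 * g) mod m" using j0_ex by blast
  have j0: "j0 \<noteq> 0"
  proof
    assume "j0 = 0"
    then have "inH 1" using inH_cong[OF X(1)] X(2) by simp
    then have "inH (g * 1)" by (rule inH_mult)
    then have "inH (1 * g)" by simp
    then have "dd dvd 1" by (rule dvd_of_inH)
    then show False using g_props(5) by simp
  qed
  have gm: "g mod m = (g * X + (g * j0) * g) mod m"
  proof -
    have "g mod m = (g * (1 mod m)) mod m" by (simp add: mod_mult_right_eq)
    also have "\<dots> = (g * ((X + j0 * g) mod m)) mod m" using X(2) by simp
    also have "\<dots> = (g * (X + j0 * g)) mod m" by (simp add: mod_mult_right_eq)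
    finally show ?thesis by (simp add: algebra_simps)
  qed
  define A where "A = (g * j0 - 1) * g"
  have gj: "g * j0 \<ge> 1" using j0 g_props(3) by simp
  have Ag: "A + g = (g * j0) * g"
  proof -
    have "g * j0 = (g * j0 - 1) + 1" using gj by simp
    then show ?thesis unfolding A_def by (metis add_mult_distrib mult_1)
  qed
  have "(A + g * X) + g = g * X + (A + g)" by (simp add: algebra_simps)
  also have "\<dots> = g * X + (g * j0) * g" using Ag by simp
  finally have eqA: "(A + g * X) + g = g * X + (g * j0) * g" .
  have "((A + g * X) + g) mod m = (g * X + (g * j0) * g) mod m" by (simp only: eqA)
  also have "\<dots> = g mod m" using gm by simp
  finally have "((A + g * X) + g) mod m = (0 + g) mod m" by simp
  then have "(A + g * X) mod m = 0 mod m" by (rule mod_cancel_nat)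
  then have "inH (A + g * X)" using inH_cong[OF inH_zero] by simp
  then have "inH A" using inH_sub inH_mult[OF X(1)] by blast
  then have d1: "dd dvd g * j0 - 1" unfolding A_def by (rule dvd_of_inH)
  have cop1: "coprime dd j0"
  proof -
    have a: "gcd dd j0 dvd g * j0 - 1" using dvd_trans[OF gcd_dvd1 d1] .
    have b: "gcd dd j0 dvd g * j0" by (simp add: dvd_mult)
    have "gcd dd j0 dvd g * j0 - (g * j0 - 1)" using dvd_diff_nat[OF b a] .
    moreover have "g * j0 - (g * j0 - 1) = 1" using gj by simp
    ultimately show ?thesis by (simp add: coprime_iff_gcd_eq_1)
  qed
  show "coprime dd g"
  proof -
    have a: "gcd dd g dvd g * j0 - 1" using dvd_trans[OF gcd_dvd1 d1] .
    have b: "gcd dd g dvd g * j0" by (simp add: dvd_mult2)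
    have "gcd dd g dvd g * j0 - (g * j0 - 1)" using dvd_diff_nat[OF b a] .
    moreover have "g * j0 - (g * j0 - 1) = 1" using gj by simp
    ultimately show ?thesis by (simp add: coprime_iff_gcd_eq_1)
  qed
  assume hx: "inH x"
  have xm: "x mod m = (x * X + (x * j0) * g) mod m"
  proof -
    have "x mod m = (x * (1 mod m)) mod m" by (simp add: mod_mult_right_eq)
    also have "\<dots> = (x * ((X + j0 * g) mod m)) mod m" using X(2) by simp
    also have "\<dots> = (x * (X + j0 * g)) mod m" by (simp add: mod_mult_right_eq)
    finally show ?thesis by (simp add: algebra_simps)
  qed
  have "inH ((x * j0) * g + x * X)" using inH_cong[OF hx] xm by (simp add: add.commute)
  then have "inH ((x * j0) * g)" using inH_sub inH_mult[OF X(1)] by blast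
  then have "dd dvd x * j0" by (rule dvd_of_inH)
  then show "dd dvd x" using cop1 coprime_dvd_mult_left_iff by blast
qed

lemma dd_dvd_m: "dd dvd m" using main_dvd[OF inH_m] .
lemma dd_dvd_h: "h \<in> OS \<Longrightarrow> h \<noteq> g \<Longrightarrow> dd dvd h" using main_dvd[OF inH_h] .

end


context src
begin

definition TT :: "nat set" where "TT = {t. dd * t \<in> S}"

lemma TT_iff: "t \<in> TT \<longleftrightarrow> dd * t \<in> S" by (simp add: TT_def)

lemma dd_pos: "dd > 0" by simp

lemma m_eq: "dd * (m div dd) = m" by (rule dvd_mult_div_cancel[OF dd_dvd_m])

lemma dd_ndvd_g: "\<not> dd dvd g"
proof
  assume a: "dd dvd g"
  have "dd = 1" using coprime_common_divisor_nat[OF cop_dg dvd_refl a] .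
  then show False using g_props(5) by simp
qed

lemma cop_gd: "coprime g dd" using cop_dg by (simp add: coprime_commute)

lemma dvd_wsum0: "lam g = 0 \<Longrightarrow> dd dvd wsum lam"
  unfolding wsum_def
proof (rule dvd_sum)
  fix y assume "lam g = 0" "y \<in> OS"
  then show "dd dvd lam y * y" using dd_dvd_h by (cases "y = g") auto
qed

lemma S_split: "s \<in> S \<Longrightarrow> \<exists>t k. t \<in> TT \<and> s = dd * t + g * k"
proof -
  assume "s \<in> S"
  then obtain lam k where lk: "boxed lam" "s = wsum lam + k * m" using S_decomp by blast
  have ws: "wsum lam = lam g * g + wsum (lam(g := 0))" by (rule wsum_split[OF gOS])
  define y0 where "y0 = wsum (lam(g := 0)) + k * m"
  have y0S: "y0 \<in> S" unfolding y0_def using add_in[OF wsum_in mult_in[OF m_in]] .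
  have "dd dvd wsum (lam(g := 0))" by (rule dvd_wsum0) simp
  moreover have "dd dvd k * m" using dd_dvd_m by simp
  ultimately have "dd dvd y0" unfolding y0_def by simp
  then have ye: "dd * (y0 div dd) = y0" by (rule dvd_mult_div_cancel)
  then have "y0 div dd \<in> TT" using y0S by (simp add: TT_iff)
  moreover have "s = dd * (y0 div dd) + g * lam g" using lk(2) ws ye y0_def by (simp add: algebra_simps)
  ultimately show ?thesis by blast
qed

lemma TT_ns: "numerical_semigroup TT"
proof -
  have z: "0 \<in> TT" by (simp add: TT_iff zero_in)
  have c: "\<forall>a\<in>TT. \<forall>b\<in>TT. a + b \<in> TT"
    by (simp add: TT_iff add_mult_distrib2 add_in)
  obtain N where N: "\<forall>n\<ge>N. n \<in> S" using large by blast
  have "UNIV - TT \<subseteq> {..<N}"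
  proof
    fix t assume t: "t \<in> UNIV - TT"
    show "t \<in> {..<N}"
    proof (rule ccontr)
      assume "t \<notin> {..<N}"
      then have "N \<le> t" by simp
      moreover have "t \<le> dd * t" by simp
      ultimately have "dd * t \<in> S" using N by (meson order_trans)
      then show False using t by (simp add: TT_iff)
    qed
  qed
  then have "finite (UNIV - TT)" using finite_subset by blast
  then show ?thesis using z c by (simp add: numerical_semigroup_def)
qed

sublocale T: ns TT by (rule ns.intro, rule TT_ns)

lemma g_TT: "g \<in> TT"
  using mult_in[OF g_props(1), of dd] by (simp add: TT_iff)

lemma TT_m: "multiplicity_ns TT = m div dd"
  unfolding multiplicity_ns_def[of TT]
proof (rule Least_equality)
  have "m div dd \<noteq> 0"
  proof
    assume "m div dd = 0"
    then have "m = 0" using m_eq by (metis mult_0_right)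
    then show False using m_pos by simp
  qed
  then show "m div dd \<in> TT \<and> m div dd \<noteq> 0" using m_eq m_in by (simp add: TT_iff)
next
  fix y assume y: "y \<in> TT \<and> y \<noteq> 0"
  then have "dd * y \<in> S" "dd * y \<noteq> 0" by (auto simp: TT_iff)
  then have "m \<le> dd * y" using m_le by blast
  then have "dd * (m div dd) \<le> dd * y" using m_eq by simp
  then show "m div dd \<le> y" by (rule kcancel_le[OF dd_pos])
qed

lemma mT_le: "m div dd \<le> m" by simp

lemma g_nap: "g \<notin> apery TT"
proof -
  have nA: "dd * g \<notin> apery S" by (rule alpha_props(3)[OF g_props(3)])
  have inS: "dd * g \<in> S" by (rule mult_in[OF g_props(1)])
  have a: "m \<le> dd * g" "dd * g - m \<in> S" using nA inS unfolding ap_iff by blast+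
  have le: "m div dd \<le> g" using g_props(2) mT_le by linarith
  have "dd * (g - m div dd) = dd * g - m" using m_eq by (simp add: diff_mult_distrib2)
  then have "g - m div dd \<in> TT" using a(2) by (simp add: TT_iff)
  then show ?thesis using le by (simp add: T.ap_iff TT_m)
qed

lemma g_nmg: "g \<notin> min_gens TT"
proof -
  have le: "m div dd < g" using g_props(2) mT_le by linarith
  have a: "g - m div dd \<in> TT" using g_nap g_TT le by (simp add: T.ap_iff TT_m)
  have b: "m div dd \<in> TT" "m div dd \<noteq> 0" using T.m_in T.m_pos TT_m by auto
  have "(g - m div dd) + m div dd \<notin> min_gens TT"
    using not_mg_intro[OF a b(1) _ b(2)] le by simp
  then show ?thesis using le by simp
qed

lemma g_big: "g > dd * multiplicity_ns TT"
  using g_props(2) m_eq TT_m by simp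

lemma apTT: "t \<in> apery TT \<longleftrightarrow> dd * t \<in> apery S"
proof -
  have e1: "m div dd \<le> t \<longleftrightarrow> m \<le> dd * t" using m_eq
    by (metis dd_pos mult_le_cancel1 not_gr0 mult_le_cancel_left_pos)
  have e2: "dd * (t - m div dd) = dd * t - m" using m_eq by (simp add: diff_mult_distrib2)
  show ?thesis unfolding T.ap_iff ap_iff TT_m using e1 e2 by (simp add: TT_iff)
qed

lemma mgTT: "t \<in> min_gens TT \<longleftrightarrow> dd * t \<in> min_gens S"
proof
  assume t: "t \<in> min_gens TT"
  have tT: "t \<in> TT" "t \<noteq> 0" using t by (auto simp: T.mg_iff)
  show "dd * t \<in> min_gens S" unfolding mg_iff
  proof (intro conjI)
    show "dd * t \<in> S" using tT by (simp add: TT_iff)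
    show "dd * t \<noteq> 0" using tT by simp
    show "\<not> (\<exists>a\<in>S. \<exists>b\<in>S. a \<noteq> 0 \<and> b \<noteq> 0 \<and> dd * t = a + b)"
    proof
      assume "\<exists>a\<in>S. \<exists>b\<in>S. a \<noteq> 0 \<and> b \<noteq> 0 \<and> dd * t = a + b"
      then obtain a b where ab: "a \<in> S" "b \<in> S" "a \<noteq> 0" "b \<noteq> 0" "dd * t = a + b" by blast
      obtain ta ka where a: "ta \<in> TT" "a = dd * ta + g * ka" using S_split[OF ab(1)] by blast
      obtain tb kb where b: "tb \<in> TT" "b = dd * tb + g * kb" using S_split[OF ab(2)] by blast
      have "dd * t + g * 0 = dd * (ta + tb) + g * (ka + kb)" using ab(5) a(2) b(2) by (simp add: algebra_simps)
      from key_eq[OF cop_gd this dd_pos] obtain j where j: "ka + kb = dd * j" "t = ta + tb + g * j"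
        by auto
      show False
      proof (cases j)
        case 0
        then have "ka = 0" "kb = 0" using j by auto
        then have "ta \<noteq> 0" "tb \<noteq> 0" "t = ta + tb" using a(2) b(2) ab(3,4) j(2) 0 by auto
        then show False using not_mg_intro[OF a(1) b(1)] t by simp
      next
        case (Suc j')
        define r where "r = ta + tb + g * j'"
        have tr: "t = r + g" using j Suc by (simp add: r_def)
        have rT: "r \<in> TT" unfolding r_def
          using T.add_in[OF T.add_in[OF a(1) b(1)] T.mult_in[OF g_TT, of j']] by (simp add: mult.commute)
        show False
        proof (cases "r = 0")
          case True
          then have "t = g" using tr by simp
          then show False using t g_nmg by simp
        next
          case False
          moreover have "g \<noteq> 0" using g_props(3) by simp
          ultimately show False using not_mg_intro[OF rT g_TT] t tr by simp
        qed
      qed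
    qed
  qed
next
  assume d: "dd * t \<in> min_gens S"
  have dS: "dd * t \<in> S" "dd * t \<noteq> 0" using d by (auto simp: mg_iff)
  show "t \<in> min_gens TT" unfolding T.mg_iff
  proof (intro conjI)
    show "t \<in> TT" using dS by (simp add: TT_iff)
    show "t \<noteq> 0" using dS by auto
    show "\<not> (\<exists>a\<in>TT. \<exists>b\<in>TT. a \<noteq> 0 \<and> b \<noteq> 0 \<and> t = a + b)"
    proof
      assume "\<exists>a\<in>TT. \<exists>b\<in>TT. a \<noteq> 0 \<and> b \<noteq> 0 \<and> t = a + b"
      then obtain a b where ab: "a \<in> TT" "b \<in> TT" "a \<noteq> 0" "b \<noteq> 0" "t = a + b" by blast
      have i1: "dd * a \<in> S" "dd * b \<in> S" using ab(1,2) by (auto simp: TT_iff)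
      have i2: "dd * a \<noteq> 0" "dd * b \<noteq> 0" using ab(3,4) by auto
      have "dd * t = dd * a + dd * b" using ab(5) by (simp add: algebra_simps)
      then show False using not_mg_intro[OF i1 i2] d by simp
    qed
  qed
qed

lemma mg_div: "x \<in> min_gens S \<Longrightarrow> x \<noteq> g \<Longrightarrow> dd dvd x"
proof -
  assume x: "x \<in> min_gens S" "x \<noteq> g"
  show "dd dvd x"
  proof (cases "x = m")
    case True then show ?thesis using dd_dvd_m by simp
  next
    case False
    then have "x \<in> OS" using x(1) by (simp add: other_gens_def)
    then show ?thesis using dd_dvd_h x(2) by blast
  qed
qed

lemma ogTT: "other_gens TT = (\<lambda>x. x div dd) ` (OS - {g})"
proof (intro equalityI subsetI)
  fix t assume t: "t \<in> other_gens TT"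
  then have t1: "dd * t \<in> min_gens S" "t \<noteq> m div dd" using mgTT TT_m by (auto simp: other_gens_def)
  have "dd * t \<noteq> m"
  proof
    assume "dd * t = m"
    then have "m div dd = (dd * t) div dd" by simp
    also have "\<dots> = t" by (rule nonzero_mult_div_cancel_left) simp
    finally show False using t1(2) by simp
  qed
  moreover have "dd * t \<noteq> g" using dd_ndvd_g by (metis dvd_triv_left)
  ultimately have "dd * t \<in> OS - {g}" using t1(1) by (simp add: other_gens_def)
  moreover have "t = (dd * t) div dd" by (rule kdiv[OF dd_pos])
  ultimately show "t \<in> (\<lambda>x. x div dd) ` (OS - {g})" by blast
next
  fix t assume "t \<in> (\<lambda>x. x div dd) ` (OS - {g})"
  then obtain x where x: "x \<in> OS" "x \<noteq> g" "t = x div dd" by blast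
  have xm: "x \<in> min_gens S" "x \<noteq> m" using x(1) by (auto simp: other_gens_def)
  have "dd dvd x" using dd_dvd_h x by blast
  then have dx: "dd * t = x" unfolding x(3) by (rule dvd_mult_div_cancel)
  then have "t \<in> min_gens TT" using mgTT xm(1) by simp
  moreover have "t \<noteq> m div dd" using dx xm(2) m_eq by auto
  ultimately show "t \<in> other_gens TT" using TT_m by (simp add: other_gens_def)
qed

lemma alTT: "x \<in> OS \<Longrightarrow> x \<noteq> g \<Longrightarrow> alpha_ns TT (x div dd) = al x"
proof -
  assume x: "x \<in> OS" "x \<noteq> g"
  have dx: "dd * (x div dd) = x" using dd_dvd_h[OF x] by (rule dvd_mult_div_cancel)
  have "\<And>j. j * (x div dd) \<in> apery TT \<longleftrightarrow> j * x \<in> apery S"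
  proof -
    fix j
    have "dd * (j * (x div dd)) = j * x" using dx by (metis mult.left_commute)
    then show "j * (x div dd) \<in> apery TT \<longleftrightarrow> j * x \<in> apery S" using apTT by simp
  qed
  then show ?thesis by (simp add: alpha_ns_def)
qed

lemma inj_div: "inj_on (\<lambda>x. x div dd) (OS - {g})"
proof (rule inj_onI)
  fix x y assume "x \<in> OS - {g}" "y \<in> OS - {g}" "x div dd = y div dd"
  moreover have "dd dvd x" "dd dvd y" using dd_dvd_h calculation(1,2) by auto
  ultimately show "x = y" by (metis dvd_mult_div_cancel)
qed

lemma sum_TT: "(\<Sum>u\<in>other_gens TT. f u) = (\<Sum>x\<in>OS - {g}. f (x div dd))"
  unfolding ogTT using sum.reindex[OF inj_div, of f] by simp

lemma TT_rect: "alpha_rectangular TT"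
proof -
  have fin: "finite (OS - {g})" using og_finite by simp
  have "apery TT = {(\<Sum>u\<in>other_gens TT. lam u * u) | lam. \<forall>u\<in>other_gens TT. lam u \<le> alpha_ns TT u}"
  proof (intro equalityI subsetI)
    fix t assume "t \<in> apery TT"
    then have "dd * t \<in> apery S" using apTT by simp
    then obtain lam where l: "boxed lam" "dd * t = wsum lam" using ap_rect by blast
    define R where "R = (\<Sum>y\<in>OS - {g}. lam y * y)"
    have wr: "wsum lam = lam g * g + R" unfolding R_def by (rule wsum_rem[OF gOS])
    have dR: "dd dvd R" unfolding R_def
    proof (rule dvd_sum)
      fix y assume "y \<in> OS - {g}" then show "dd dvd lam y * y" using dd_dvd_h by simp
    qed
    have "dd dvd lam g * g + R" using l(2) wr by (metis dvd_triv_left)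
    then have "dd dvd lam g * g" using dR by (simp add: dvd_add_left_iff)
    then have "dd dvd lam g" using coprime_dvd_mult_left_iff[OF cop_dg] by blast
    moreover have "lam g < dd" using l(1) gOS by (simp add: boxed_def le_imp_less_Suc)
    ultimately have lg: "lam g = 0" by (metis dvd_imp_le not_le neq0_conv)
    have R2: "R = dd * (\<Sum>y\<in>OS - {g}. lam y * (y div dd))"
      unfolding R_def sum_distrib_left
    proof (rule sum.cong[OF refl])
      fix y assume "y \<in> OS - {g}"
      then have "dd * (y div dd) = y" using dd_dvd_h by (intro dvd_mult_div_cancel) auto
      then show "lam y * y = dd * (lam y * (y div dd))" by (metis mult.left_commute)
    qed
    have "dd * t = dd * (\<Sum>y\<in>OS - {g}. lam y * (y div dd))" using l(2) wr lg R2 by simp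
    then have te: "t = (\<Sum>y\<in>OS - {g}. lam y * (y div dd))" by (rule kcancel_eq[OF dd_pos])
    define lT where "lT u = lam (dd * u)" for u
    have "(\<Sum>u\<in>other_gens TT. lT u * u) = (\<Sum>y\<in>OS - {g}. lT (y div dd) * (y div dd))" by (rule sum_TT)
    also have "\<dots> = (\<Sum>y\<in>OS - {g}. lam y * (y div dd))"
    proof (rule sum.cong[OF refl])
      fix y assume "y \<in> OS - {g}"
      then have "dd * (y div dd) = y" using dd_dvd_h by (intro dvd_mult_div_cancel) auto
      then show "lT (y div dd) * (y div dd) = lam y * (y div dd)" by (simp add: lT_def)
    qed
    finally have A: "t = (\<Sum>u\<in>other_gens TT. lT u * u)" using te by simp
    have B: "\<forall>u\<in>other_gens TT. lT u \<le> alpha_ns TT u"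
    proof
      fix u assume "u \<in> other_gens TT"
      then obtain y where y: "y \<in> OS" "y \<noteq> g" "u = y div dd" unfolding ogTT by blast
      have "dd * u = y" unfolding y(3) using dd_dvd_h[OF y(1,2)] by (rule dvd_mult_div_cancel)
      then have "lT u = lam y" by (simp add: lT_def)
      also have "\<dots> \<le> al y" using l(1) y(1) by (simp add: boxed_def)
      also have "\<dots> = alpha_ns TT u" using alTT[OF y(1,2)] y(3) by simp
      finally show "lT u \<le> alpha_ns TT u" .
    qed
    show "t \<in> {(\<Sum>u\<in>other_gens TT. lam u * u) | lam. \<forall>u\<in>other_gens TT. lam u \<le> alpha_ns TT u}"
      using A B by blast
  next
    fix t assume "t \<in> {(\<Sum>u\<in>other_gens TT. lam u * u) | lam. \<forall>u\<in>other_gens TT. lam u \<le> alpha_ns TT u}"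
    then obtain lT where lT: "t = (\<Sum>u\<in>other_gens TT. lT u * u)" "\<forall>u\<in>other_gens TT. lT u \<le> alpha_ns TT u"
      by blast
    define lam where "lam x = (if x = g then 0 else lT (x div dd))" for x
    have bx: "boxed lam" unfolding boxed_def
    proof
      fix x assume x: "x \<in> OS"
      show "lam x \<le> al x"
      proof (cases "x = g")
        case True then show ?thesis by (simp add: lam_def)
      next
        case False
        then have "x div dd \<in> other_gens TT" unfolding ogTT using x by blast
        then have "lT (x div dd) \<le> alpha_ns TT (x div dd)" using lT(2) by blast
        then show ?thesis using alTT[OF x False] False by (simp add: lam_def)
      qed
    qed
    have "wsum lam = lam g * g + (\<Sum>y\<in>OS - {g}. lam y * y)" by (rule wsum_rem[OF gOS])
    also have "\<dots> = (\<Sum>y\<in>OS - {g}. dd * (lT (y div dd) * (y div dd)))"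
    proof -
      have "(\<Sum>y\<in>OS - {g}. lam y * y) = (\<Sum>y\<in>OS - {g}. dd * (lT (y div dd) * (y div dd)))"
      proof (rule sum.cong[OF refl])
        fix y assume y: "y \<in> OS - {g}"
        then have "dd * (y div dd) = y" using dd_dvd_h by (intro dvd_mult_div_cancel) auto
        moreover have "lam y = lT (y div dd)" using y by (simp add: lam_def)
        ultimately show "lam y * y = dd * (lT (y div dd) * (y div dd))" by (metis mult.left_commute)
      qed
      then show ?thesis by (simp add: lam_def)
    qed
    also have "\<dots> = dd * (\<Sum>y\<in>OS - {g}. lT (y div dd) * (y div dd))" by (simp add: sum_distrib_left)
    also have "\<dots> = dd * t" using lT(1) sum_TT[of "\<lambda>u. lT u * u"] by simp
    finally have "dd * t \<in> apery S" using ap_rect bx by metis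
    then show "t \<in> apery TT" using apTT by simp
  qed
  then show ?thesis by (simp add: alpha_rectangular_def)
qed

lemma S_glue: "S = gluing_N dd TT g"
proof (intro equalityI subsetI)
  fix s assume "s \<in> S"
  then obtain t k where "t \<in> TT" "s = dd * t + g * k" using S_split by blast
  then show "s \<in> gluing_N dd TT g" by (auto simp: gluing_N_def)
next
  fix s assume "s \<in> gluing_N dd TT g"
  then obtain t k where tk: "t \<in> TT" "s = dd * t + g * k" by (auto simp: gluing_N_def)
  have "dd * t \<in> S" using tk(1) by (simp add: TT_iff)
  moreover have "g * k \<in> S" using mult_in[OF g_props(1), of k] by (simp add: mult.commute)
  ultimately show "s \<in> S" using tk(2) add_in by simp
qed

end

lemma partB:
  "\<forall>S. numerical_semigroup S \<and> S \<noteq> UNIV \<and> alpha_rectangular S \<longrightarrow>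
            (\<exists>T d1 d2. numerical_semigroup T \<and> alpha_rectangular T \<and>
              0 < d1 \<and> 0 < d2 \<and> coprime d1 d2 \<and> d1 \<in> T \<and> d1 \<notin> min_gens T \<and>
              2 \<le> d2 \<and> d1 \<notin> apery T \<and> d1 > d2 * multiplicity_ns T \<and>
              S = gluing_N d2 T d1)"
proof (intro allI impI)
  fix S assume a: "numerical_semigroup S \<and> S \<noteq> UNIV \<and> alpha_rectangular S"
  then interpret rect S by (unfold_locales) auto
  obtain g where g: "g \<in> other_gens S" "\<forall>h\<in>other_gens S. h \<noteq> g \<longrightarrow> MU h g = 0"
    using source_ex by blast
  interpret src S g by (unfold_locales) (use g in auto)
  show "\<exists>T d1 d2. numerical_semigroup T \<and> alpha_rectangular T \<and>
              0 < d1 \<and> 0 < d2 \<and> coprime d1 d2 \<and> d1 \<in> T \<and> d1 \<notin> min_gens T \<and>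
              2 \<le> d2 \<and> d1 \<notin> apery T \<and> d1 > d2 * multiplicity_ns T \<and>
              S = gluing_N d2 T d1"
    apply (rule exI[of _ TT], rule exI[of _ g], rule exI[of _ dd])
    using TT_ns TT_rect g_props cop_gd g_TT g_nmg g_nap g_big S_glue by auto
qed



theorem mainTheorem10:
  shows "(\<forall>T d1 d2. numerical_semigroup T \<and> alpha_rectangular T \<and>
            0 < d1 \<and> 0 < d2 \<and> coprime d1 d2 \<and> d1 \<in> T \<and> d1 \<notin> min_gens T \<and>
            2 \<le> d2 \<and> d1 \<notin> apery T \<and> d1 > d2 * multiplicity_ns T
          \<longrightarrow> numerical_semigroup (gluing_N d2 T d1) \<and> alpha_rectangular (gluing_N d2 T d1))
       \<and> (\<forall>S. numerical_semigroup S \<and> S \<noteq> UNIV \<and> alpha_rectangular S \<longrightarrow>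
            (\<exists>T d1 d2. numerical_semigroup T \<and> alpha_rectangular T \<and>
              0 < d1 \<and> 0 < d2 \<and> coprime d1 d2 \<and> d1 \<in> T \<and> d1 \<notin> min_gens T \<and>
              2 \<le> d2 \<and> d1 \<notin> apery T \<and> d1 > d2 * multiplicity_ns T \<and>
              S = gluing_N d2 T d1))"
  using partA partB by blast

end
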